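(* Assume (A-J). Let $f\in C^{0,1}(\mathbb{R})\cap C^1(\mathbb{R})$ with $\max_{\mathbb{R}}f'<\inf_\Omega\mathcal{J}^\delta$, and suppose $J\in\mathbb{B}^\alpha_{1,\infty}(\Omega;\delta)$ for some $\alpha\in(0,1)$. Let $t_0\in\mathbb{R}$, $u_0\in C^{0,\alpha}(\overline\Omega)$, and let $u\in C^2([t_0,\infty),C(\overline\Omega,[0,1]))$ be the unique solution of $\partial_tu=Lu+f(u)$ a.e. in $(t_0,\infty)\times\Omega$, $u(t_0,\cdot)=u_0$. Suppose $u$ is uniformly bounded by some constant $M_0>0$. Then there exists $M>0$, depending on $J$, $f'$, $M_0$, $[u_0]_{C^{0,\alpha}(\overline\Omega)}$, $\Omega$ and $\delta$, such that $$\sup_{t\ge t_0}\Big([u(t,\cdot)]_{C^{0,\alpha}(\overline\Omega)}+[\partial_tu(t,\cdot)]_{C^{0,\alpha}(\overline\Omega)}\Big)\le M.$$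
   Context: $K\subset\mathbb{R}^N$ is compact and $\Omega:=\mathbb{R}^N\setminus K$ is connected. A distance $\delta$ on $E\subset\mathbb{R}^N$ is quasi-Euclidean if $\delta(x,y)=|x-y|$ whenever $[x,y]\subset E$ and $\delta(x,y)\ge|x-y|$ for all $x,y\in E$; $\delta$ is a quasi-Euclidean distance on $\overline\Omega$. For measurable $J:[0,\infty)\to[0,\infty)$ with $|\mathrm{supp}(J)|>0$ and $x\in\overline\Omega$, $\Pi_0(J,x)=\{x\}$, $\Pi_{j+1}(J,x)=\bigcup_{z\in\Pi_j(J,x)}\mathrm{supp}(J(\delta(\cdot,z)))$; $(\Omega,\delta)$ has the $J$-covering property if $\overline\Omega=\bigcup_{j\ge0}\Pi_j(J,x)$ for all $x\in\overline\Omega$. Notation: $J_{\mathrm{rad}}(z)=J(|z|)$, $\mathcal{J}^\delta(x)=\int_\Omega J(\delta(x,z))dz$, $Lu(x)=\int_\Omega J(\delta(x,y))(u(y)-u(x))dy$; $[g]_{C^{0,\alpha}(E)}=\sup_{x\ne y\in E}|g(x)-g(y)|/|x-y|^\alpha$. (A-J): $J:[0,\infty)\to[0,\infty)$ measurable, compactly supported, $|\mathrm{supp}J|>0$; $(\Omega,\delta)$ has the $J$-covering property; $\int_{\mathbb{R}^N}J_{\mathrm{rad}}=1$; for every $y\in\overline\Omega$, $\|J(\delta(y,\cdot))-J(\delta(z,\cdot))\|_{L^1(\Omega)}\to0$ as $z\to y$; $\mathcal{J}^\delta\in L^\infty(\Omega)$. $\mathbb{B}^\alpha_{1,\infty}(\Omega;\delta)$: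 the set of $g:[0,\infty)\to\mathbb{R}$ with $g(|\cdot|)\in L^1(\mathbb{R}^N)$ and $\sup_{y\ne z\in\Omega}\|g(\delta(y,\cdot))-g(\delta(z,\cdot))\|_{L^1(\Omega)}/|y-z|^\alpha<\infty$. *)

theory Defs
  imports "HOL-Analysis.Analysis"
begin

definition is_distance_on :: "'a set \<Rightarrow> ('a \<Rightarrow> 'a \<Rightarrow> real) \<Rightarrow> bool" where
  "is_distance_on E \<delta> \<longleftrightarrow>
     (\<forall>x\<in>E. \<forall>y\<in>E. 0 \<le> \<delta> x y \<and> (\<delta> x y = 0 \<longleftrightarrow> x = y) \<and> \<delta> x y = \<delta> y x) \<and>
     (\<forall>x\<in>E. \<forall>y\<in>E. \<forall>z\<in>E. \<delta> x z \<le> \<delta> x y + \<delta> y z)"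

definition quasi_euclidean :: "'a::euclidean_space set \<Rightarrow> ('a \<Rightarrow> 'a \<Rightarrow> real) \<Rightarrow> bool" where
  "quasi_euclidean E \<delta> \<longleftrightarrow> is_distance_on E \<delta> \<and>
     (\<forall>x\<in>E. \<forall>y\<in>E. closed_segment x y \<subseteq> E \<longrightarrow> \<delta> x y = dist x y) \<and>
     (\<forall>x\<in>E. \<forall>y\<in>E. \<delta> x y \<ge> dist x y)"

definition supp_J :: "(real \<Rightarrow> real) \<Rightarrow> real set" where
  "supp_J J = closure {t. 0 \<le> t \<and> J t \<noteq> 0}"

definition supp_Jz :: "'a::euclidean_space set \<Rightarrow> (real \<Rightarrow> real) \<Rightarrow> ('a \<Rightarrow> 'a \<Rightarrow> real) \<Rightarrow> 'a \<Rightarrow> 'a set" where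
  "supp_Jz E J \<delta> z = closure {y\<in>E. J (\<delta> y z) \<noteq> 0}"

fun Pi_J :: "'a::euclidean_space set \<Rightarrow> (real \<Rightarrow> real) \<Rightarrow> ('a \<Rightarrow> 'a \<Rightarrow> real) \<Rightarrow> 'a \<Rightarrow> nat \<Rightarrow> 'a set" where
  "Pi_J E J \<delta> x 0 = {x}"
| "Pi_J E J \<delta> x (Suc j) = (\<Union>z\<in>Pi_J E J \<delta> x j. supp_Jz E J \<delta> z)"

definition J_covering :: "'a::euclidean_space set \<Rightarrow> (real \<Rightarrow> real) \<Rightarrow> ('a \<Rightarrow> 'a \<Rightarrow> real) \<Rightarrow> bool" where
  "J_covering \<Omega> J \<delta> \<longleftrightarrow> (\<forall>x\<in>closure \<Omega>. closure \<Omega> = (\<Union>j. Pi_J (closure \<Omega>) J \<delta> x j))"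

definition L1_diff :: "'a::euclidean_space set \<Rightarrow> (real \<Rightarrow> real) \<Rightarrow> ('a \<Rightarrow> 'a \<Rightarrow> real) \<Rightarrow> 'a \<Rightarrow> 'a \<Rightarrow> ennreal" where
  "L1_diff \<Omega> J \<delta> y z = (\<integral>\<^sup>+ w. ennreal (indicator \<Omega> w * \<bar>J (\<delta> y w) - J (\<delta> z w)\<bar>) \<partial>lborel)"

definition calJ_enn :: "'a::euclidean_space set \<Rightarrow> (real \<Rightarrow> real) \<Rightarrow> ('a \<Rightarrow> 'a \<Rightarrow> real) \<Rightarrow> 'a \<Rightarrow> ennreal" where
  "calJ_enn \<Omega> J \<delta> x = (\<integral>\<^sup>+ z. ennreal (indicator \<Omega> z * J (\<delta> x z)) \<partial>lborel)"

definition calJ :: "'a::euclidean_space set \<Rightarrow> (real \<Rightarrow> real) \<Rightarrow> ('a \<Rightarrow> 'a \<Rightarrow> real) \<Rightarrow> 'a \<Rightarrow> real" where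
  "calJ \<Omega> J \<delta> x = enn2real (calJ_enn \<Omega> J \<delta> x)"

definition assumption_AJ :: "'a::euclidean_space set \<Rightarrow> (real \<Rightarrow> real) \<Rightarrow> ('a \<Rightarrow> 'a \<Rightarrow> real) \<Rightarrow> bool" where
  "assumption_AJ (\<Omega>::'a set) J \<delta> \<longleftrightarrow>
     set_borel_measurable lebesgue {0..} J \<and>
     (\<forall>t\<ge>0. J t \<ge> 0) \<and>
     bounded {t. 0 \<le> t \<and> J t \<noteq> 0} \<and>
     emeasure lborel (supp_J J) > 0 \<and>
     J_covering \<Omega> J \<delta> \<and>
     integrable lborel (\<lambda>z::'a. J (norm z)) \<and> (\<integral>z. J (norm (z::'a)) \<partial>lborel) = 1 \<and>
     (\<forall>y\<in>closure \<Omega>. ((\<lambda>z. L1_diff \<Omega> J \<delta> y z) \<longlongrightarrow> 0) (at y within closure \<Omega>)) \<and>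
     (\<exists>C. AE x in lborel. x \<in> \<Omega> \<longrightarrow> calJ_enn \<Omega> J \<delta> x \<le> ennreal C)"

definition besov_B :: "real \<Rightarrow> 'a::euclidean_space set \<Rightarrow> ('a \<Rightarrow> 'a \<Rightarrow> real) \<Rightarrow> (real \<Rightarrow> real) \<Rightarrow> bool" where
  "besov_B \<alpha> (\<Omega>::'a set) \<delta> g \<longleftrightarrow> integrable lborel (\<lambda>z::'a. g (norm z)) \<and>
     (\<exists>C. \<forall>y\<in>\<Omega>. \<forall>z\<in>\<Omega>. y \<noteq> z \<longrightarrow> L1_diff \<Omega> g \<delta> y z \<le> ennreal (C * dist y z powr \<alpha>))"

definition holder_semi :: "real \<Rightarrow> 'a::metric_space set \<Rightarrow> ('a \<Rightarrow> real) \<Rightarrow> ereal" where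
  "holder_semi \<alpha> E g = (SUP p\<in>{(x, y). x \<in> E \<and> y \<in> E \<and> x \<noteq> y}.
       ereal (\<bar>g (fst p) - g (snd p)\<bar> / dist (fst p) (snd p) powr \<alpha>))"

definition holder_space :: "real \<Rightarrow> 'a::metric_space set \<Rightarrow> ('a \<Rightarrow> real) \<Rightarrow> bool" where
  "holder_space \<alpha> E g \<longleftrightarrow> bounded (g ` E) \<and> holder_semi \<alpha> E g < \<infinity>"

definition Cb :: "'a::metric_space set \<Rightarrow> ('a \<Rightarrow> real) \<Rightarrow> bool" where
  "Cb E g \<longleftrightarrow> continuous_on E g \<and> bounded (g ` E)"

definition sup_has_deriv :: "'a set \<Rightarrow> real \<Rightarrow> (real \<Rightarrow> 'a \<Rightarrow> real) \<Rightarrow> (real \<Rightarrow> 'a \<Rightarrow> real) \<Rightarrow> bool" where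
  "sup_has_deriv E t0 v v' \<longleftrightarrow> (\<forall>t\<ge>t0.
     ((\<lambda>s. (SUP x\<in>E. \<bar>v s x - v t x - (s - t) * v' t x\<bar>) / \<bar>s - t\<bar>) \<longlongrightarrow> 0) (at t within {t0..}))"

definition sup_continuous :: "'a set \<Rightarrow> real \<Rightarrow> (real \<Rightarrow> 'a \<Rightarrow> real) \<Rightarrow> bool" where
  "sup_continuous E t0 v \<longleftrightarrow> (\<forall>t\<ge>t0.
     ((\<lambda>s. SUP x\<in>E. \<bar>v s x - v t x\<bar>) \<longlongrightarrow> 0) (at t within {t0..}))"

definition C2_curve :: "'a::metric_space set \<Rightarrow> real \<Rightarrow> (real \<Rightarrow> 'a \<Rightarrow> real) \<Rightarrow> (real \<Rightarrow> 'a \<Rightarrow> real) \<Rightarrow> (real \<Rightarrow> 'a \<Rightarrow> real) \<Rightarrow> bool" where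
  "C2_curve E t0 u u1 u2 \<longleftrightarrow>
     (\<forall>t\<ge>t0. Cb E (u t) \<and> Cb E (u1 t) \<and> Cb E (u2 t) \<and> (\<forall>x\<in>E. u t x \<in> {0..1})) \<and>
     sup_has_deriv E t0 u u1 \<and> sup_has_deriv E t0 u1 u2 \<and> sup_continuous E t0 u2"

definition nl_op :: "'a::euclidean_space set \<Rightarrow> (real \<Rightarrow> real) \<Rightarrow> ('a \<Rightarrow> 'a \<Rightarrow> real) \<Rightarrow> ('a \<Rightarrow> real) \<Rightarrow> 'a \<Rightarrow> real" where
  "nl_op \<Omega> J \<delta> v x = (LINT y:\<Omega>|lborel. J (\<delta> x y) * (v y - v x))"

end

theory Submission
  imports Defs
begin

lemma AE_open_exists:
  fixes S :: "'b::euclidean_space set"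
  assumes ae: "AE x in lborel. P x" and S: "open S" and x: "x \<in> S" and r: "r > 0"
  shows "\<exists>y\<in>S. dist x y < r \<and> P y"
proof (rule ccontr)
  assume na: "\<not> ?thesis"
  obtain r' where r': "r' > 0" "ball x r' \<subseteq> S" using S x open_contains_ball by blast
  define r2 where "r2 = min r r'"
  have r2: "r2 > 0" "ball x r2 \<subseteq> S" "ball x r2 \<subseteq> ball x r" using r r' by (auto simp: r2_def)
  from ae obtain N where N: "{x \<in> space lborel. \<not> P x} \<subseteq> N" "emeasure lborel N = 0" "N \<in> sets lborel"
    by (rule AE_E)
  have "ball x r2 \<subseteq> N" using na r2 N(1) by (fastforce simp: dist_commute)
  then have "emeasure lborel (ball x r2) \<le> emeasure lborel N" using N(3) by (intro emeasure_mono) auto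
  then have "emeasure lborel (ball x r2) = 0" using N(2) by simp
  then have "measure lborel (ball x r2) = 0" by (simp add: measure_def)
  with content_ball_pos[OF r2(1), of x] show False by simp
qed

lemma AE_cont_le:
  fixes S :: "'b::euclidean_space set"
  assumes ae: "AE x in lborel. x \<in> S \<longrightarrow> g x \<le> c" and S: "open S"
    and g: "continuous_on S (g::_\<Rightarrow>real)" and x: "x \<in> S"
  shows "g x \<le> c"
proof (rule ccontr)
  assume "\<not> g x \<le> c"
  then have e: "g x - c > 0" by simp
  from g x e obtain d where d: "d > 0" "\<forall>y\<in>S. dist y x < d \<longrightarrow> dist (g y) (g x) < g x - c"
    unfolding continuous_on_iff by blast
  from AE_open_exists[OF ae S x d(1)] obtain y where "y \<in> S" "dist x y < d" "g y \<le> c" by blast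
  with d(2) show False by (auto simp: dist_commute dist_real_def)
qed


lemma bounded_absD: "bounded ((g::'x\<Rightarrow>real) ` E) \<Longrightarrow> \<exists>b\<ge>0. \<forall>x\<in>E. \<bar>g x\<bar> \<le> b"
  unfolding bounded_iff by (metis abs_ge_zero image_eqI order.trans real_norm_def)

lemma sup_deriv_pt:
  fixes v v' :: "real \<Rightarrow> 'x \<Rightarrow> real"
  assumes bd: "\<forall>t\<ge>t0. bounded (v t ` E) \<and> bounded (v' t ` E)" and t: "t \<ge> t0" and s: "s \<ge> t0"
    and x: "x \<in> E"
  shows "\<bar>v s x - v t x - (s - t) * v' t x\<bar> \<le> (SUP y\<in>E. \<bar>v s y - v t y - (s - t) * v' t y\<bar>)"
proof -
  have bb: "bounded (v s ` E)" "bounded (v t ` E)" "bounded (v' t ` E)" using bd s t by auto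
  obtain b1 b2 b3 where b1: "\<forall>x\<in>E. \<bar>v s x\<bar> \<le> b1" and b2: "\<forall>x\<in>E. \<bar>v t x\<bar> \<le> b2"
    and b3: "\<forall>x\<in>E. \<bar>v' t x\<bar> \<le> b3" using bounded_absD[OF bb(1)] bounded_absD[OF bb(2)] bounded_absD[OF bb(3)] by blast
  have B: "\<bar>v s y - v t y - (s - t) * v' t y\<bar> \<le> b1 + b2 + \<bar>s - t\<bar> * b3" if y: "y \<in> E" for y
  proof -
    have 1: "\<bar>(s - t) * v' t y\<bar> \<le> \<bar>s - t\<bar> * b3" using b3 y by (simp add: abs_mult mult_left_mono)
    have 2: "\<bar>v s y - v t y - (s - t) * v' t y\<bar> \<le> \<bar>v s y\<bar> + \<bar>v t y\<bar> + \<bar>(s - t) * v' t y\<bar>"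
      using abs_triangle_ineq4[of "v s y - v t y" "(s - t) * v' t y"] abs_triangle_ineq4[of "v s y" "v t y"] by linarith
    have "\<bar>v s y\<bar> \<le> b1" "\<bar>v t y\<bar> \<le> b2" using b1 b2 y by blast+
    then show ?thesis using 1 2 by linarith
  qed
  have "bdd_above ((\<lambda>y. \<bar>v s y - v t y - (s - t) * v' t y\<bar>) ` E)"
    by (rule bdd_aboveI2[where M="b1 + b2 + \<bar>s - t\<bar> * b3"]) (rule B)
  then show ?thesis by (rule cSUP_upper[OF x])
qed

lemma sup_deriv:
  fixes v v' :: "real \<Rightarrow> 'x \<Rightarrow> real"
  assumes sd: "sup_has_deriv E t0 v v'" and bd: "\<forall>t\<ge>t0. bounded (v t ` E) \<and> bounded (v' t ` E)"
    and t: "t \<ge> t0"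
  shows "\<forall>x\<in>E. ((\<lambda>s. v s x) has_real_derivative v' t x) (at t within {t0..})"
    and "\<exists>d>0. \<exists>B. \<forall>s\<ge>t0. \<bar>s - t\<bar> < d \<longrightarrow> (\<forall>x\<in>E. \<bar>v s x - v t x\<bar> \<le> B * \<bar>s - t\<bar>)"
proof -
  define Q where "Q s = (SUP y\<in>E. \<bar>v s y - v t y - (s - t) * v' t y\<bar>)" for s
  have lim: "((\<lambda>s. Q s / \<bar>s - t\<bar>) \<longlongrightarrow> 0) (at t within {t0..})"
    using sd t unfolding sup_has_deriv_def Q_def by blast
  have ev: "eventually (\<lambda>s. s \<in> {t0..} \<and> s \<noteq> t) (at t within {t0..})"
    unfolding eventually_at_filter by simp
  show "\<forall>x\<in>E. ((\<lambda>s. v s x) has_real_derivative v' t x) (at t within {t0..})"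
  proof
    fix x assume x: "x \<in> E"
    have "((\<lambda>s. (v s x - v t x) / (s - t) - v' t x) \<longlongrightarrow> 0) (at t within {t0..})"
    proof (rule Lim_null_comparison[OF _ lim])
      show "\<forall>\<^sub>F s in at t within {t0..}. norm ((v s x - v t x) / (s - t) - v' t x) \<le> Q s / \<bar>s - t\<bar>"
        using ev
      proof (rule eventually_mono)
        fix s assume s: "s \<in> {t0..} \<and> s \<noteq> t"
        have "(v s x - v t x) / (s - t) - v' t x = (v s x - v t x - (s - t) * v' t x) / (s - t)"
          using s by (simp add: field_simps)
        then have "norm ((v s x - v t x) / (s - t) - v' t x) = \<bar>v s x - v t x - (s - t) * v' t x\<bar> / \<bar>s - t\<bar>"
          by (simp add: abs_divide)
        also have "\<dots> \<le> Q s / \<bar>s - t\<bar>"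
          using sup_deriv_pt[OF bd t _ x, of s] s unfolding Q_def by (intro divide_right_mono) auto
        finally show "norm ((v s x - v t x) / (s - t) - v' t x) \<le> Q s / \<bar>s - t\<bar>" .
      qed
    qed
    then show "((\<lambda>s. v s x) has_real_derivative v' t x) (at t within {t0..})"
      unfolding has_field_derivative_iff by (rule LIM_zero_cancel)
  qed
  have "bounded (v' t ` E)" using bd t by auto
  from bounded_absD[OF this] obtain b3 where b3: "b3 \<ge> 0" "\<forall>x\<in>E. \<bar>v' t x\<bar> \<le> b3" by blast
  have "eventually (\<lambda>s. Q s / \<bar>s - t\<bar> < 1) (at t within {t0..})"
    using lim by (rule order_tendstoD) simp
  then obtain d where d: "d > 0" "\<forall>s\<in>{t0..}. s \<noteq> t \<and> dist s t < d \<longrightarrow> Q s / \<bar>s - t\<bar> < 1"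
    unfolding eventually_at by blast
  have "\<forall>s\<ge>t0. \<bar>s - t\<bar> < d \<longrightarrow> (\<forall>x\<in>E. \<bar>v s x - v t x\<bar> \<le> (1 + b3) * \<bar>s - t\<bar>)"
  proof (intro allI impI ballI)
    fix s x assume s: "s \<ge> t0" "\<bar>s - t\<bar> < d" and x: "x \<in> E"
    show "\<bar>v s x - v t x\<bar> \<le> (1 + b3) * \<bar>s - t\<bar>"
    proof (cases "s = t")
      case True then show ?thesis by simp
    next
      case False
      then have "Q s < \<bar>s - t\<bar>" using d(2) s by (auto simp: dist_real_def)
      moreover have "\<bar>v s x - v t x - (s - t) * v' t x\<bar> \<le> Q s"
        using sup_deriv_pt[OF bd t s(1) x] unfolding Q_def .
      moreover have "\<bar>(s - t) * v' t x\<bar> \<le> \<bar>s - t\<bar> * b3" using b3 x by (simp add: abs_mult mult_left_mono)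
      moreover have "\<bar>v s x - v t x\<bar> \<le> \<bar>v s x - v t x - (s - t) * v' t x\<bar> + \<bar>(s - t) * v' t x\<bar>"
        by (metis abs_triangle_ineq diff_add_cancel)
      moreover have "(1 + b3) * \<bar>s - t\<bar> = \<bar>s - t\<bar> + \<bar>s - t\<bar> * b3" by (simp add: algebra_simps)
      ultimately show ?thesis by linarith
    qed
  qed
  then show "\<exists>d>0. \<exists>B. \<forall>s\<ge>t0. \<bar>s - t\<bar> < d \<longrightarrow> (\<forall>x\<in>E. \<bar>v s x - v t x\<bar> \<le> B * \<bar>s - t\<bar>)"
    using d(1) by blast
qed


lemma ode_bound:
  fixes w w' :: "real \<Rightarrow> real"
  assumes d: "\<forall>t\<ge>t0. (w has_real_derivative w' t) (at t within {t0..})"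
    and neg: "\<forall>t>t0. m < \<bar>w t\<bar> \<longrightarrow> w t * w' t < 0"
    and i: "\<bar>w t0\<bar> \<le> m"
    and t1: "t1 \<ge> t0"
  shows "\<bar>w t1\<bar> \<le> m"
proof (rule ccontr)
  assume c: "\<not> \<bar>w t1\<bar> \<le> m"
  have cont: "continuous_on {t0..t1} w"
    by (rule DERIV_continuous_on[where D=w']) (use d in \<open>auto intro: DERIV_subset\<close>)
  define S where "S = {x\<in>{t0..t1}. \<bar>w x\<bar> \<le> m}"
  have "closed S" unfolding S_def
    by (intro continuous_on_closed_Collect_le continuous_intros cont)
  moreover have "bounded S" by (rule bounded_subset[of "{t0..t1}"]) (auto simp: S_def)
  ultimately have "compact S" using compact_eq_bounded_closed by blast
  moreover have "S \<noteq> {}" using i t1 by (auto simp: S_def)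
  ultimately obtain s where s: "s \<in> S" "\<forall>x\<in>S. x \<le> s" using compact_attains_sup by blast
  have st: "t0 \<le> s" "s < t1" using s(1) c by (auto simp: S_def, metis less_eq_real_def)
  have big: "m < \<bar>w x\<bar>" if "s < x" "x \<le> t1" for x
    using s(2) that st unfolding S_def by (metis (no_types, lifting) atLeastAtMost_iff linorder_not_le mem_Collect_eq order.trans less_imp_le)
  define g where "g x = w x * w x" for x
  have gd: "(g has_real_derivative 2 * (w x * w' x)) (at x)" if "t0 < x" for x
  proof -
    have "(w has_real_derivative w' x) (at x within {t0..})"
      using d that by auto
    then have "(w has_real_derivative w' x) (at x within {t0<..})"
      by (rule DERIV_subset) auto
    then have "(w has_real_derivative w' x) (at x)"
      using that by (simp add: at_within_open[of x "{t0<..}"])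
    from DERIV_mult[OF this this] show ?thesis unfolding g_def by (simp add: algebra_simps)
  qed
  have gc: "continuous_on {s..t1} g" unfolding g_def
    by (intro continuous_intros continuous_on_subset[OF cont]) (use st in auto)
  obtain l z where z: "s < z" "z < t1" "(g has_real_derivative l) (at z)" "g t1 - g s = (t1 - s) * l"
  proof -
    have "g differentiable (at x)" if "s < x" "x < t1" for x
      using gd[of x] that st unfolding real_differentiable_def by auto
    then show ?thesis using MVT[OF st(2) gc] that by blast
  qed
  have "l = 2 * (w z * w' z)" using DERIV_unique[OF z(3) gd] z st by auto
  then have "l < 0" using neg big[of z] z st by auto
  then have "(t1 - s) * l < 0" using z st by (simp add: mult_pos_neg)
  then have "g t1 < g s" using z(4) by simp
  moreover have "g s \<le> m * m"
  proof -
    have "\<bar>w s\<bar> \<le> m" using s(1) unfolding S_def by simp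
    then have "\<bar>w s\<bar> * \<bar>w s\<bar> \<le> m * m" by (intro mult_mono) auto
    then show ?thesis unfolding g_def by (simp add: abs_mult[symmetric])
  qed
  moreover have "m * m < g t1"
  proof -
    have "m \<ge> 0" using i by simp
    have "m < \<bar>w t1\<bar>" using c by simp
    then have "m * m < \<bar>w t1\<bar> * \<bar>w t1\<bar>" using \<open>m \<ge> 0\<close> by (intro mult_strict_mono) auto
    then show ?thesis unfolding g_def by (simp add: abs_mult[symmetric])
  qed
  ultimately show False by simp
qed


lemma holder_cont:
  fixes g :: "'b::metric_space \<Rightarrow> real"
  assumes h: "\<forall>x\<in>S. \<forall>y\<in>S. \<bar>g x - g y\<bar> \<le> C * dist x y powr \<alpha>" and a: "\<alpha> > 0"
  shows "continuous_on S g"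
  unfolding continuous_on_def
proof (intro ballI)
  fix x assume x: "x \<in> S"
  have d: "((\<lambda>y. dist y x) \<longlongrightarrow> 0) (at x within S)"
    using tendsto_dist[OF tendsto_ident_at[of x S] tendsto_const[of x]] by simp
  have p: "((\<lambda>y. dist y x powr \<alpha>) \<longlongrightarrow> 0) (at x within S)"
    by (rule tendsto_zero_powrI[OF d tendsto_const]) (use a in auto)
  have "((\<lambda>y. C * dist y x powr \<alpha>) \<longlongrightarrow> C * 0) (at x within S)"
    by (intro tendsto_mult tendsto_const p)
  then have q: "((\<lambda>y. C * dist y x powr \<alpha>) \<longlongrightarrow> 0) (at x within S)" by simp
  have "((\<lambda>y. g y - g x) \<longlongrightarrow> 0) (at x within S)"
  proof (rule Lim_null_comparison[OF _ q])
    show "\<forall>\<^sub>F y in at x within S. norm (g y - g x) \<le> C * dist y x powr \<alpha>"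
      unfolding eventually_at_filter using h x by (auto intro!: always_eventually)
  qed
  then show "(g \<longlongrightarrow> g x) (at x within S)" by (rule LIM_zero_cancel)
qed

context
  fixes \<Omega> :: "'a::euclidean_space set" and J :: "real \<Rightarrow> real" and \<delta> :: "'a \<Rightarrow> 'a \<Rightarrow> real"
    and C CJ \<alpha> :: real
  assumes opn: "open \<Omega>"
    and qe: "quasi_euclidean (closure \<Omega>) \<delta>"
    and jm: "(\<lambda>t. J \<bar>t\<bar>) \<in> borel_measurable borel"
    and jnn: "\<forall>t\<ge>0. J t \<ge> 0"
    and bes: "\<forall>y\<in>\<Omega>. \<forall>z\<in>\<Omega>. y \<noteq> z \<longrightarrow> L1_diff \<Omega> J \<delta> y z \<le> ennreal (C * dist y z powr \<alpha>)"
    and C0: "C \<ge> 0" and a0: "\<alpha> > 0" and CJ0: "CJ \<ge> 0"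
    and cj: "AE x in lborel. x \<in> \<Omega> \<longrightarrow> calJ_enn \<Omega> J \<delta> x \<le> ennreal CJ"
begin

lemma dnn: "x \<in> closure \<Omega> \<Longrightarrow> y \<in> closure \<Omega> \<Longrightarrow> 0 \<le> \<delta> x y"
  using qe unfolding quasi_euclidean_def is_distance_on_def by blast

lemma dsym: "x \<in> closure \<Omega> \<Longrightarrow> y \<in> closure \<Omega> \<Longrightarrow> \<delta> x y = \<delta> y x"
  using qe unfolding quasi_euclidean_def is_distance_on_def by blast

lemma dtri: "x \<in> closure \<Omega> \<Longrightarrow> y \<in> closure \<Omega> \<Longrightarrow> z \<in> closure \<Omega> \<Longrightarrow> \<delta> x z \<le> \<delta> x y + \<delta> y z"
  using qe unfolding quasi_euclidean_def is_distance_on_def by blast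

lemma dseg: "x \<in> closure \<Omega> \<Longrightarrow> y \<in> closure \<Omega> \<Longrightarrow> closed_segment x y \<subseteq> closure \<Omega> \<Longrightarrow> \<delta> x y = dist x y"
  using qe unfolding quasi_euclidean_def by blast

lemma dcont:
  assumes x: "x \<in> closure \<Omega>"
  shows "continuous_on \<Omega> (\<delta> x)"
  unfolding continuous_on_iff
proof (intro ballI allI impI)
  fix z e assume z: "z \<in> \<Omega>" and e: "(0::real) < e"
  obtain r where r: "r > 0" "ball z r \<subseteq> \<Omega>" using opn z open_contains_ball by blast
  show "\<exists>d>0. \<forall>z'\<in>\<Omega>. dist z' z < d \<longrightarrow> dist (\<delta> x z') (\<delta> x z) < e"
  proof (intro exI[of _ "min r e"] conjI ballI impI)
    show "min r e > 0" using r e by simp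
    fix z' assume z': "z' \<in> \<Omega>" and dz: "dist z' z < min r e"
    have "closed_segment z z' \<subseteq> ball z r"
      using dz r(1) by (intro closed_segment_subset) (auto simp: dist_commute)
    then have seg: "closed_segment z z' \<subseteq> closure \<Omega>" using r(2) closure_subset by blast
    have zc: "z \<in> closure \<Omega>" "z' \<in> closure \<Omega>" using z z' closure_subset by auto
    have e1: "\<delta> z z' = dist z z'" using dseg[OF zc seg] .
    have e2: "\<delta> z' z = dist z z'" using dsym[OF zc] e1 by simp
    have "\<delta> x z' \<le> \<delta> x z + \<delta> z z'" using dtri[OF x zc] .
    moreover have "\<delta> x z \<le> \<delta> x z' + \<delta> z' z" using dtri[OF x zc(2) zc(1)] .
    ultimately have "\<bar>\<delta> x z' - \<delta> x z\<bar> \<le> dist z z'" using e1 e2 by linarith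
    then show "dist (\<delta> x z') (\<delta> x z) < e" using dz by (simp add: dist_real_def dist_commute)
  qed
qed

lemma Obor: "\<Omega> \<in> sets borel" using opn by simp

lemma ind_meas:
  assumes "continuous_on \<Omega> g"
  shows "(\<lambda>z. indicator \<Omega> z * (g z::real)) \<in> borel_measurable lborel"
  using borel_measurable_continuous_on_indicator[OF Obor assms] by simp

lemma kmeas:
  assumes x: "x \<in> closure \<Omega>"
  shows "(\<lambda>z. indicator \<Omega> z * J (\<delta> x z)) \<in> borel_measurable lborel"
proof -
  have h: "(\<lambda>z. indicator \<Omega> z * \<delta> x z) \<in> borel_measurable borel"
    using ind_meas[OF dcont[OF x]] by simp
  have "(\<lambda>z. J \<bar>indicator \<Omega> z * \<delta> x z\<bar>) \<in> borel_measurable borel"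
    using measurable_compose[OF h jm] by simp
  then have m: "(\<lambda>z. indicator \<Omega> z * J \<bar>indicator \<Omega> z * \<delta> x z\<bar>) \<in> borel_measurable borel"
    by (rule borel_measurable_times[OF borel_measurable_indicator[OF Obor]])
  have "(\<lambda>z. indicator \<Omega> z * J \<bar>indicator \<Omega> z * \<delta> x z\<bar>) = (\<lambda>z. indicator \<Omega> z * J (\<delta> x z))"
  proof
    fix z show "indicator \<Omega> z * J \<bar>indicator \<Omega> z * \<delta> x z\<bar> = indicator \<Omega> z * J (\<delta> x z)"
      using dnn[OF x, of z] closure_subset[of \<Omega>] by (cases "z \<in> \<Omega>") auto
  qed
  with m show ?thesis by simp
qed

lemma kvmeas:
  assumes x: "x \<in> closure \<Omega>" and v: "continuous_on \<Omega> v"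
  shows "(\<lambda>z. indicator \<Omega> z * J (\<delta> x z) * v z) \<in> borel_measurable lborel"
proof -
  have "(\<lambda>z. (indicator \<Omega> z * J (\<delta> x z)) * (indicator \<Omega> z * v z)) \<in> borel_measurable lborel"
    by (rule borel_measurable_times[OF kmeas[OF x] ind_meas[OF v]])
  moreover have "(\<lambda>z. (indicator \<Omega> z * J (\<delta> x z)) * (indicator \<Omega> z * v z)) = (\<lambda>z. indicator \<Omega> z * J (\<delta> x z) * v z)"
    by (auto simp: indicator_def)
  ultimately show ?thesis by simp
qed

lemma dmeas:
  assumes x: "x \<in> closure \<Omega>" and y: "y \<in> closure \<Omega>"
  shows "(\<lambda>z. indicator \<Omega> z * \<bar>J (\<delta> x z) - J (\<delta> y z)\<bar>) \<in> borel_measurable lborel"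
proof -
  have "(\<lambda>z. \<bar>indicator \<Omega> z * J (\<delta> x z) - indicator \<Omega> z * J (\<delta> y z)\<bar>) \<in> borel_measurable lborel"
    by (rule borel_measurable_abs[OF borel_measurable_diff[OF kmeas[OF x] kmeas[OF y]]])
  moreover have "(\<lambda>z. \<bar>indicator \<Omega> z * J (\<delta> x z) - indicator \<Omega> z * J (\<delta> y z)\<bar>) = (\<lambda>z. indicator \<Omega> z * \<bar>J (\<delta> x z) - J (\<delta> y z)\<bar>)"
    by (auto simp: indicator_def)
  ultimately show ?thesis by simp
qed

lemma knn: "x \<in> closure \<Omega> \<Longrightarrow> 0 \<le> indicator \<Omega> z * J (\<delta> x z)"
  using dnn[of x z] jnn closure_subset[of \<Omega>] by (cases "z \<in> \<Omega>") auto

lemma calJ_tri: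
  assumes x: "x \<in> closure \<Omega>" and y: "y \<in> closure \<Omega>"
  shows "calJ_enn \<Omega> J \<delta> x \<le> calJ_enn \<Omega> J \<delta> y + L1_diff \<Omega> J \<delta> x y"
proof -
  have "calJ_enn \<Omega> J \<delta> x \<le> (\<integral>\<^sup>+ z. ennreal (indicator \<Omega> z * J (\<delta> y z)) + ennreal (indicator \<Omega> z * \<bar>J (\<delta> x z) - J (\<delta> y z)\<bar>) \<partial>lborel)"
    unfolding calJ_enn_def
  proof (rule nn_integral_mono)
    fix z
    have a: "0 \<le> indicator \<Omega> z * J (\<delta> y z)" using knn[OF y] .
    have b: "0 \<le> indicator \<Omega> z * \<bar>J (\<delta> x z) - J (\<delta> y z)\<bar>" by simp
    have "indicator \<Omega> z * J (\<delta> x z) \<le> indicator \<Omega> z * J (\<delta> y z) + indicator \<Omega> z * \<bar>J (\<delta> x z) - J (\<delta> y z)\<bar>"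
      by (cases "z \<in> \<Omega>") auto
    then have "ennreal (indicator \<Omega> z * J (\<delta> x z)) \<le> ennreal (indicator \<Omega> z * J (\<delta> y z) + indicator \<Omega> z * \<bar>J (\<delta> x z) - J (\<delta> y z)\<bar>)"
      by (rule ennreal_leI)
    then show "ennreal (indicator \<Omega> z * J (\<delta> x z)) \<le> ennreal (indicator \<Omega> z * J (\<delta> y z)) + ennreal (indicator \<Omega> z * \<bar>J (\<delta> x z) - J (\<delta> y z)\<bar>)"
      using a b by (simp add: ennreal_plus)
  qed
  also have "\<dots> = calJ_enn \<Omega> J \<delta> y + L1_diff \<Omega> J \<delta> x y"
    unfolding calJ_enn_def L1_diff_def
    using kmeas[OF y] dmeas[OF x y] by (intro nn_integral_add) auto
  finally show ?thesis .
qed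

lemma L1_self: "L1_diff \<Omega> J \<delta> x x = 0"
  unfolding L1_diff_def by simp

lemma L1_bound:
  assumes "x \<in> \<Omega>" "y \<in> \<Omega>"
  shows "L1_diff \<Omega> J \<delta> x y \<le> ennreal (C * dist x y powr \<alpha>)"
  using bes assms by (cases "x = y") (auto simp: L1_self)

lemma calJ_fin:
  assumes x: "x \<in> \<Omega>"
  shows "calJ_enn \<Omega> J \<delta> x < \<infinity>"
proof -
  obtain y where y: "y \<in> \<Omega>" "dist x y < 1" "y \<in> \<Omega> \<longrightarrow> calJ_enn \<Omega> J \<delta> y \<le> ennreal CJ"
    using AE_open_exists[OF cj opn x, of 1] by auto
  have "calJ_enn \<Omega> J \<delta> x \<le> calJ_enn \<Omega> J \<delta> y + L1_diff \<Omega> J \<delta> x y"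
    using calJ_tri x y(1) closure_subset by blast
  also have "\<dots> \<le> ennreal CJ + ennreal (C * dist x y powr \<alpha>)"
    using y L1_bound[OF x y(1)] by (intro add_mono) auto
  also have "\<dots> < \<infinity>" by simp
  finally show ?thesis .
qed

lemma kint:
  assumes x: "x \<in> \<Omega>"
  shows "integrable lborel (\<lambda>z. indicator \<Omega> z * J (\<delta> x z))"
proof -
  have xc: "x \<in> closure \<Omega>" using x closure_subset by blast
  show ?thesis
    using kmeas[OF xc] knn[OF xc] calJ_fin[OF x] unfolding calJ_enn_def
    by (intro integrableI_nonneg) auto
qed

lemma calJ_eq:
  assumes x: "x \<in> \<Omega>"
  shows "calJ \<Omega> J \<delta> x = (\<integral>z. indicator \<Omega> z * J (\<delta> x z) \<partial>lborel)"
proof -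
  have xc: "x \<in> closure \<Omega>" using x closure_subset by blast
  show ?thesis unfolding calJ_def calJ_enn_def
    using kmeas[OF xc] knn[OF xc] by (subst integral_eq_nn_integral) auto
qed

lemma kvint:
  assumes x: "x \<in> \<Omega>" and v: "continuous_on \<Omega> v" and vb: "\<forall>z\<in>\<Omega>. \<bar>v z\<bar> \<le> 1"
  shows "integrable lborel (\<lambda>z. indicator \<Omega> z * J (\<delta> x z) * v z)"
proof -
  have xc: "x \<in> closure \<Omega>" using x closure_subset by blast
  show ?thesis
  proof (rule Bochner_Integration.integrable_bound[OF kint[OF x] kvmeas[OF xc v]])
    show "AE z in lborel. norm (indicator \<Omega> z * J (\<delta> x z) * v z) \<le> norm (indicator \<Omega> z * J (\<delta> x z))"
    proof (rule AE_I2)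
      fix z
      have "\<bar>indicator \<Omega> z * J (\<delta> x z) * v z\<bar> \<le> \<bar>indicator \<Omega> z * J (\<delta> x z)\<bar>"
      proof (cases "z \<in> \<Omega>")
        case True
        then have "\<bar>v z\<bar> \<le> 1" using vb by blast
        then show ?thesis by (simp add: abs_mult mult_left_le)
      qed simp
      then show "norm (indicator \<Omega> z * J (\<delta> x z) * v z) \<le> norm (indicator \<Omega> z * J (\<delta> x z))" by simp
    qed
  qed
qed

lemma kLip:
  assumes x: "x \<in> \<Omega>" and y: "y \<in> \<Omega>" and v: "continuous_on \<Omega> v" and vb: "\<forall>z\<in>\<Omega>. \<bar>v z\<bar> \<le> 1"
  shows "\<bar>(\<integral>z. indicator \<Omega> z * J (\<delta> x z) * v z \<partial>lborel) - (\<integral>z. indicator \<Omega> z * J (\<delta> y z) * v z \<partial>lborel)\<bar>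
         \<le> C * dist x y powr \<alpha>"
proof -
  let ?f = "\<lambda>z. indicator \<Omega> z * J (\<delta> x z) * v z - indicator \<Omega> z * J (\<delta> y z) * v z"
  have i: "integrable lborel ?f" using kvint[OF x v vb] kvint[OF y v vb] by (rule Bochner_Integration.integrable_diff)
  have eq: "(\<integral>z. indicator \<Omega> z * J (\<delta> x z) * v z \<partial>lborel) - (\<integral>z. indicator \<Omega> z * J (\<delta> y z) * v z \<partial>lborel)
      = (\<integral>z. ?f z \<partial>lborel)"
    using kvint[OF x v vb] kvint[OF y v vb] by (rule Bochner_Integration.integral_diff[symmetric])
  have "ennreal (norm (\<integral>z. ?f z \<partial>lborel)) \<le> (\<integral>\<^sup>+z. norm (?f z) \<partial>lborel)"
    using integral_norm_bound_ennreal[OF i] .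
  also have "\<dots> \<le> L1_diff \<Omega> J \<delta> x y"
    unfolding L1_diff_def
  proof (rule nn_integral_mono)
    fix z
    have "\<bar>?f z\<bar> \<le> indicator \<Omega> z * \<bar>J (\<delta> x z) - J (\<delta> y z)\<bar>"
    proof (cases "z \<in> \<Omega>")
      case True
      then have "\<bar>v z\<bar> \<le> 1" using vb by blast
      moreover have "?f z = (J (\<delta> x z) - J (\<delta> y z)) * v z" using True by (simp add: algebra_simps)
      ultimately show ?thesis using True by (simp add: abs_mult mult_left_le)
    qed simp
    then show "ennreal (norm (?f z)) \<le> ennreal (indicator \<Omega> z * \<bar>J (\<delta> x z) - J (\<delta> y z)\<bar>)"
      by (intro ennreal_leI) simp
  qed
  also have "\<dots> \<le> ennreal (C * dist x y powr \<alpha>)" using L1_bound[OF x y] .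
  finally have "norm (\<integral>z. ?f z \<partial>lborel) \<le> C * dist x y powr \<alpha>"
    using C0 by (subst (asm) ennreal_le_iff) auto
  then show ?thesis using eq by simp
qed

lemma calJ_Lip:
  assumes x: "x \<in> \<Omega>" and y: "y \<in> \<Omega>"
  shows "\<bar>calJ \<Omega> J \<delta> x - calJ \<Omega> J \<delta> y\<bar> \<le> C * dist x y powr \<alpha>"
  using kLip[OF x y, of "\<lambda>_. 1"] by (simp add: calJ_eq[OF x] calJ_eq[OF y])

lemma calJ_cont: "continuous_on \<Omega> (calJ \<Omega> J \<delta>)"
  using calJ_Lip a0 by (intro holder_cont) auto

lemma calJ_le:
  assumes x: "x \<in> \<Omega>"
  shows "calJ \<Omega> J \<delta> x \<le> CJ"
proof (rule AE_cont_le[OF _ opn calJ_cont x])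
  show "AE x in lborel. x \<in> \<Omega> \<longrightarrow> calJ \<Omega> J \<delta> x \<le> CJ"
    using cj by eventually_elim (use CJ0 in \<open>auto simp: calJ_def enn2real_leI\<close>)
qed

lemma calJ_nn: "0 \<le> calJ \<Omega> J \<delta> x"
  unfolding calJ_def by simp

lemma nl_op_eq:
  assumes x: "x \<in> \<Omega>" and v: "continuous_on \<Omega> v" and vb: "\<forall>z\<in>\<Omega>. \<bar>v z\<bar> \<le> 1"
  shows "nl_op \<Omega> J \<delta> v x = (\<integral>z. indicator \<Omega> z * J (\<delta> x z) * v z \<partial>lborel) - v x * calJ \<Omega> J \<delta> x"
proof -
  have "nl_op \<Omega> J \<delta> v x = (\<integral>z. indicator \<Omega> z * J (\<delta> x z) * v z - v x * (indicator \<Omega> z * J (\<delta> x z)) \<partial>lborel)"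
    unfolding nl_op_def set_lebesgue_integral_def by (intro Bochner_Integration.integral_cong) (auto simp: algebra_simps)
  also have "\<dots> = (\<integral>z. indicator \<Omega> z * J (\<delta> x z) * v z \<partial>lborel) - (\<integral>z. v x * (indicator \<Omega> z * J (\<delta> x z)) \<partial>lborel)"
    using kvint[OF x v vb] kint[OF x] by (intro Bochner_Integration.integral_diff) auto
  also have "(\<integral>z. v x * (indicator \<Omega> z * J (\<delta> x z)) \<partial>lborel) = v x * calJ \<Omega> J \<delta> x"
    by (simp add: calJ_eq[OF x])
  finally show ?thesis .
qed

end


lemma jc:
  fixes v :: "real \<Rightarrow> 'b::metric_space \<Rightarrow> real"
  assumes c: "\<forall>t\<ge>t0. continuous_on S (v t)"
    and l: "\<forall>t\<ge>t0. \<exists>d>0. \<exists>B. \<forall>s\<ge>t0. \<bar>s - t\<bar> < d \<longrightarrow> (\<forall>x\<in>S. \<bar>v s x - v t x\<bar> \<le> B * \<bar>s - t\<bar>)"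
  shows "continuous_on ({t0..} \<times> S) (\<lambda>p. v (fst p) (snd p))"
  unfolding continuous_on_iff
proof (intro ballI allI impI)
  fix p e assume p: "p \<in> {t0..} \<times> S" and e: "(0::real) < e"
  obtain t x where px: "p = (t, x)" "t \<ge> t0" "x \<in> S" using p by auto
  obtain d1 B where d1: "d1 > 0" "\<forall>s\<ge>t0. \<bar>s - t\<bar> < d1 \<longrightarrow> (\<forall>x\<in>S. \<bar>v s x - v t x\<bar> \<le> B * \<bar>s - t\<bar>)"
    using l px by blast
  obtain d2 where d2: "d2 > 0" "\<forall>y\<in>S. dist y x < d2 \<longrightarrow> dist (v t y) (v t x) < e / 2"
    using c px e unfolding continuous_on_iff by (meson half_gt_zero)
  define d where "d = min d1 (min d2 (e / (2 * (\<bar>B\<bar> + 1))))"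
  have dpos: "d > 0" using d1 d2 e by (simp add: d_def)
  show "\<exists>d>0. \<forall>q\<in>{t0..} \<times> S. dist q p < d \<longrightarrow> dist (v (fst q) (snd q)) (v (fst p) (snd p)) < e"
  proof (intro exI[of _ d] conjI ballI impI)
    show "d > 0" by fact
    fix q assume q: "q \<in> {t0..} \<times> S" and dq: "dist q p < d"
    obtain s y where qy: "q = (s, y)" "s \<ge> t0" "y \<in> S" using q by auto
    have ds: "\<bar>s - t\<bar> < d" using dist_fst_le[of q p] dq qy px by (simp add: dist_real_def)
    have dy: "dist y x < d" using dist_snd_le[of q p] dq qy px by simp
    have 1: "\<bar>v s y - v t y\<bar> \<le> B * \<bar>s - t\<bar>" using d1 qy ds by (simp add: d_def)
    have "B * \<bar>s - t\<bar> \<le> \<bar>B\<bar> * \<bar>s - t\<bar>" by (simp add: mult_right_mono)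
    also have "\<dots> \<le> \<bar>B\<bar> * (e / (2 * (\<bar>B\<bar> + 1)))" using ds by (intro mult_left_mono) (auto simp: d_def)
    also have "\<dots> < e / 2"
    proof -
      have "\<bar>B\<bar> * (e / (2 * (\<bar>B\<bar> + 1))) = (e / 2) * (\<bar>B\<bar> / (\<bar>B\<bar> + 1))" by (simp add: field_simps)
      also have "\<dots> < (e / 2) * 1" using e by (intro mult_strict_left_mono) auto
      finally show ?thesis by simp
    qed
    finally have 2: "\<bar>v s y - v t y\<bar> < e / 2" using 1 by linarith
    have 3: "\<bar>v t y - v t x\<bar> < e / 2" using d2 qy dy by (auto simp: d_def dist_real_def)
    have "\<bar>v s y - v t x\<bar> \<le> \<bar>v s y - v t y\<bar> + \<bar>v t y - v t x\<bar>"
      using abs_triangle_ineq[of "v s y - v t y" "v t y - v t x"] by simp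
    then show "dist (v (fst q) (snd q)) (v (fst p) (snd p)) < e"
      using 2 3 qy px by (simp add: dist_real_def)
  qed
qed

lemma fmvt:
  fixes f f' :: "real \<Rightarrow> real"
  assumes d: "\<forall>s. (f has_real_derivative f' s) (at s)" and a: "a \<in> {0..1}" and b: "b \<in> {0..1}"
  shows "\<exists>z\<in>{0..1}. f a - f b = f' z * (a - b)"
proof -
  consider "a = b" | "a < b" | "b < a" by linarith
  then show ?thesis
  proof cases
    case 1 then show ?thesis using a by auto
  next
    case 2
    from MVT2[OF 2, of f f'] d obtain z where "a < z" "z < b" "f b - f a = (b - a) * f' z" by blast
    then show ?thesis using a b by (intro bexI[of _ z]) (auto simp: algebra_simps)
  next
    case 3
    from MVT2[OF 3, of f f'] d obtain z where "b < z" "z < a" "f a - f b = (a - b) * f' z" by blast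
    then show ?thesis using a b by (intro bexI[of _ z]) (auto simp: algebra_simps)
  qed
qed

lemma holder_ext:
  fixes g :: "'b::metric_space \<Rightarrow> real"
  assumes g: "continuous_on (closure S) g" and h: "\<forall>x\<in>S. \<forall>y\<in>S. \<bar>g x - g y\<bar> \<le> M * dist x y powr \<alpha>"
    and a: "\<alpha> > 0"
  shows "holder_semi \<alpha> (closure S) g \<le> ereal M"
proof -
  have pc: "continuous_on (closure S) (\<lambda>x. dist x y powr \<alpha>)" for y
    by (intro continuous_on_powr' continuous_intros) (use a in auto)
  have gc: "continuous_on (closure S) (\<lambda>x. \<bar>g x - g y\<bar> - M * dist x y powr \<alpha>)" for y
    by (intro continuous_intros g pc)
  have gc2: "continuous_on (closure S) (\<lambda>y. \<bar>g x - g y\<bar> - M * dist x y powr \<alpha>)" for x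
  proof -
    have pc': "continuous_on (closure S) (\<lambda>y. dist x y powr \<alpha>)"
      by (intro continuous_on_powr' continuous_intros) (use a in auto)
    show ?thesis by (intro continuous_intros g pc')
  qed
  have step1: "\<bar>g x - g y\<bar> - M * dist x y powr \<alpha> \<le> 0" if x: "x \<in> closure S" and y: "y \<in> S" for x y
    by (rule continuous_le_on_closure[OF gc x]) (use h y in auto)
  have step2: "\<bar>g x - g y\<bar> - M * dist x y powr \<alpha> \<le> 0" if x: "x \<in> closure S" and y: "y \<in> closure S" for x y
    by (rule continuous_le_on_closure[OF gc2 y]) (use step1 x in auto)
  show ?thesis unfolding holder_semi_def
  proof (rule SUP_least)
    fix p assume "p \<in> {(x, y). x \<in> closure S \<and> y \<in> closure S \<and> x \<noteq> y}"
    then obtain x y where p: "p = (x, y)" "x \<in> closure S" "y \<in> closure S" "x \<noteq> y" by auto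
    have dp: "dist x y powr \<alpha> > 0" using p by simp
    have "\<bar>g x - g y\<bar> \<le> M * dist x y powr \<alpha>" using step2[OF p(2,3)] by simp
    then have "\<bar>g x - g y\<bar> / dist x y powr \<alpha> \<le> M" using dp by (simp add: pos_divide_le_eq)
    then show "ereal (\<bar>g (fst p) - g (snd p)\<bar> / dist (fst p) (snd p) powr \<alpha>) \<le> ereal M" using p by simp
  qed
qed


lemma abs4: "\<bar>(p1::real) - p2 - p3 + p4\<bar> \<le> \<bar>p1\<bar> + \<bar>p2\<bar> + \<bar>p3\<bar> + \<bar>p4\<bar>"
proof -
  have "\<bar>p1 - p2 - p3 + p4\<bar> \<le> \<bar>p1 - p2 - p3\<bar> + \<bar>p4\<bar>" by (rule abs_triangle_ineq)
  moreover have "\<bar>p1 - p2 - p3\<bar> \<le> \<bar>p1 - p2\<bar> + \<bar>p3\<bar>" by (rule abs_triangle_ineq4)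
  moreover have "\<bar>p1 - p2\<bar> \<le> \<bar>p1\<bar> + \<bar>p2\<bar>" by (rule abs_triangle_ineq4)
  ultimately show ?thesis by linarith
qed

lemma inner:
  fixes \<Omega> :: "'a::euclidean_space set" and J :: "real \<Rightarrow> real" and \<delta> :: "'a \<Rightarrow> 'a \<Rightarrow> real"
    and C CJ \<alpha> :: real and f f' :: "real \<Rightarrow> real" and s0 c Bf H t0 :: real
    and u0 :: "'a \<Rightarrow> real" and u u1 u2 :: "real \<Rightarrow> 'a \<Rightarrow> real"
  assumes opn: "open \<Omega>"
    and qe: "quasi_euclidean (closure \<Omega>) \<delta>"
    and jm: "(\<lambda>t. J \<bar>t\<bar>) \<in> borel_measurable borel"
    and jnn: "\<forall>t\<ge>0. J t \<ge> 0"
    and bes: "\<forall>y\<in>\<Omega>. \<forall>z\<in>\<Omega>. y \<noteq> z \<longrightarrow> L1_diff \<Omega> J \<delta> y z \<le> ennreal (C * dist y z powr \<alpha>)"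
    and C0: "C \<ge> 0" and a0: "\<alpha> > 0" and CJ0: "CJ \<ge> 0"
    and cj: "AE x in lborel. x \<in> \<Omega> \<longrightarrow> calJ_enn \<Omega> J \<delta> x \<le> ennreal CJ"
    and c0: "c > 0" and cJ: "\<forall>x\<in>\<Omega>. f' s0 + c \<le> calJ \<Omega> J \<delta> x" and fs0: "\<forall>s. f' s \<le> f' s0"
    and Bf: "\<forall>s\<in>{0..1}. \<bar>f' s\<bar> \<le> Bf"
    and fd: "\<forall>s. (f has_real_derivative f' s) (at s)"
    and H0: "H \<ge> 0" and hu0: "\<forall>x\<in>\<Omega>. \<forall>y\<in>\<Omega>. \<bar>u0 x - u0 y\<bar> \<le> H * dist x y powr \<alpha>"
    and C2: "C2_curve (closure \<Omega>) t0 u u1 u2"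
    and eqn: "AE p in lborel. fst p > t0 \<and> snd p \<in> \<Omega> \<longrightarrow>
        u1 (fst p) (snd p) = nl_op \<Omega> J \<delta> (u (fst p)) (snd p) + f (u (fst p) (snd p))"
    and init: "\<forall>x\<in>closure \<Omega>. u t0 x = u0 x"
  shows "(SUP t\<in>{t0..}. holder_semi \<alpha> (closure \<Omega>) (u t) + holder_semi \<alpha> (closure \<Omega>) (u1 t))
     \<le> ereal ((H + 2 * C / c) + (2 * C + (CJ + Bf) * (H + 2 * C / c)))"
proof -
  note ctx = opn qe jm jnn bes C0 a0 CJ0 cj
  define E where "E = closure \<Omega>"
  define M1 where "M1 = H + 2 * C / c"
  define M2 where "M2 = 2 * C + (CJ + Bf) * M1"
  have OE: "\<Omega> \<subseteq> E" unfolding E_def by (rule closure_subset)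
  have Cb: "\<forall>t\<ge>t0. Cb E (u t) \<and> Cb E (u1 t) \<and> Cb E (u2 t) \<and> (\<forall>x\<in>E. u t x \<in> {0..1})"
    and sd1: "sup_has_deriv E t0 u u1" and sd2: "sup_has_deriv E t0 u1 u2"
    using C2 unfolding C2_curve_def E_def by auto
  have bd1: "\<forall>t\<ge>t0. bounded (u t ` E) \<and> bounded (u1 t ` E)" using Cb unfolding Cb_def by blast
  have bd2: "\<forall>t\<ge>t0. bounded (u1 t ` E) \<and> bounded (u2 t ` E)" using Cb unfolding Cb_def by blast
  have ucE: "continuous_on E (u t)" if "t \<ge> t0" for t using Cb that unfolding Cb_def by blast
  have u1cE: "continuous_on E (u1 t)" if "t \<ge> t0" for t using Cb that unfolding Cb_def by blast
  have ucO: "continuous_on \<Omega> (u t)" if "t \<ge> t0" for t using continuous_on_subset[OF ucE[OF that] OE] .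
  have u1cO: "continuous_on \<Omega> (u1 t)" if "t \<ge> t0" for t using continuous_on_subset[OF u1cE[OF that] OE] .
  have u01: "0 \<le> u t x \<and> u t x \<le> 1" if "t \<ge> t0" "x \<in> E" for t x using Cb that by auto
  have ub1: "\<forall>z\<in>\<Omega>. \<bar>u t z\<bar> \<le> 1" if "t \<ge> t0" for t using u01[OF that] OE by fastforce
  have der: "((\<lambda>s. u s x) has_real_derivative u1 t x) (at t within {t0..})" if "t \<ge> t0" "x \<in> E" for t x
    using sup_deriv(1)[OF sd1 bd1 that(1)] that(2) by blast
  have lipu: "\<forall>t\<ge>t0. \<exists>d>0. \<exists>B. \<forall>s\<ge>t0. \<bar>s - t\<bar> < d \<longrightarrow> (\<forall>x\<in>\<Omega>. \<bar>u s x - u t x\<bar> \<le> B * \<bar>s - t\<bar>)"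
    using sup_deriv(2)[OF sd1 bd1] OE by blast
  have lipu1: "\<forall>t\<ge>t0. \<exists>d>0. \<exists>B. \<forall>s\<ge>t0. \<bar>s - t\<bar> < d \<longrightarrow> (\<forall>x\<in>\<Omega>. \<bar>u1 s x - u1 t x\<bar> \<le> B * \<bar>s - t\<bar>)"
    using sup_deriv(2)[OF sd2 bd2] OE by blast

  define G where "G t x = (\<integral>z. indicator \<Omega> z * J (\<delta> x z) * u t z \<partial>lborel)" for t x
  have GL: "\<bar>G t x - G t y\<bar> \<le> C * dist x y powr \<alpha>" if "t \<ge> t0" "x \<in> \<Omega>" "y \<in> \<Omega>" for t x y
    unfolding G_def using kLip[OF ctx that(2,3) ucO[OF that(1)] ub1[OF that(1)]] .
  have Gct: "\<forall>t\<ge>t0. continuous_on \<Omega> (G t)"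
    using GL a0 by (intro allI impI holder_cont) auto
  have Glip: "\<forall>t\<ge>t0. \<exists>d>0. \<exists>B. \<forall>s\<ge>t0. \<bar>s - t\<bar> < d \<longrightarrow> (\<forall>x\<in>\<Omega>. \<bar>G s x - G t x\<bar> \<le> B * \<bar>s - t\<bar>)"
  proof (intro allI impI)
    fix t assume t: "t \<ge> t0"
    obtain d B where dB: "d > 0" "\<forall>s\<ge>t0. \<bar>s - t\<bar> < d \<longrightarrow> (\<forall>x\<in>\<Omega>. \<bar>u s x - u t x\<bar> \<le> B * \<bar>s - t\<bar>)"
      using lipu t by blast
    have "\<forall>s\<ge>t0. \<bar>s - t\<bar> < d \<longrightarrow> (\<forall>x\<in>\<Omega>. \<bar>G s x - G t x\<bar> \<le> (\<bar>B\<bar> * CJ) * \<bar>s - t\<bar>)"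
    proof (intro allI impI ballI)
      fix s x assume s: "s \<ge> t0" "\<bar>s - t\<bar> < d" and x: "x \<in> \<Omega>"
      let ?k = "\<lambda>z. indicator \<Omega> z * J (\<delta> x z)"
      have i1: "integrable lborel (\<lambda>z. ?k z * u s z)" using kvint[OF ctx x ucO[OF s(1)] ub1[OF s(1)]] .
      have i2: "integrable lborel (\<lambda>z. ?k z * u t z)" using kvint[OF ctx x ucO[OF t] ub1[OF t]] .
      have ik: "integrable lborel ?k" using kint[OF ctx x] .
      have "G s x - G t x = (\<integral>z. ?k z * u s z - ?k z * u t z \<partial>lborel)"
        unfolding G_def using i1 i2 by (rule Bochner_Integration.integral_diff[symmetric])
      also have "\<bar>\<dots>\<bar> \<le> (\<integral>z. (\<bar>B\<bar> * \<bar>s - t\<bar>) * ?k z \<partial>lborel)"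
      proof (rule integral_abs_bound_integral)
        show "integrable lborel (\<lambda>z. ?k z * u s z - ?k z * u t z)"
          using i1 i2 by (rule Bochner_Integration.integrable_diff)
        show "integrable lborel (\<lambda>z. (\<bar>B\<bar> * \<bar>s - t\<bar>) * ?k z)"
          using ik by (rule integrable_mult_right)
        fix z
        show "\<bar>?k z * u s z - ?k z * u t z\<bar> \<le> (\<bar>B\<bar> * \<bar>s - t\<bar>) * ?k z"
        proof (cases "z \<in> \<Omega>")
          case True
          have kz: "0 \<le> ?k z" using knn[OF ctx, of x z] x closure_subset[of \<Omega>] by auto
          have "\<bar>u s z - u t z\<bar> \<le> B * \<bar>s - t\<bar>" using dB s True by blast
          also have "\<dots> \<le> \<bar>B\<bar> * \<bar>s - t\<bar>" by (simp add: mult_right_mono)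
          finally have "?k z * \<bar>u s z - u t z\<bar> \<le> ?k z * (\<bar>B\<bar> * \<bar>s - t\<bar>)" using kz by (rule mult_left_mono)
          moreover have "\<bar>?k z * u s z - ?k z * u t z\<bar> = ?k z * \<bar>u s z - u t z\<bar>"
          proof -
            have "?k z * u s z - ?k z * u t z = ?k z * (u s z - u t z)" by (simp add: algebra_simps)
            then have "\<bar>?k z * u s z - ?k z * u t z\<bar> = \<bar>?k z\<bar> * \<bar>u s z - u t z\<bar>" by (metis abs_mult)
            then show ?thesis using abs_of_nonneg[OF kz] by simp
          qed
          moreover have "?k z * (\<bar>B\<bar> * \<bar>s - t\<bar>) = (\<bar>B\<bar> * \<bar>s - t\<bar>) * ?k z" by (rule mult.commute)
          ultimately show ?thesis by linarith
        qed simp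
      qed
      also have "\<dots> = (\<bar>B\<bar> * \<bar>s - t\<bar>) * calJ \<Omega> J \<delta> x" by (simp add: calJ_eq[OF ctx x])
      also have "\<dots> \<le> (\<bar>B\<bar> * \<bar>s - t\<bar>) * CJ" using calJ_le[OF ctx x] by (intro mult_left_mono) auto
      finally show "\<bar>G s x - G t x\<bar> \<le> (\<bar>B\<bar> * CJ) * \<bar>s - t\<bar>" by (simp add: algebra_simps)
    qed
    then show "\<exists>d>0. \<exists>B. \<forall>s\<ge>t0. \<bar>s - t\<bar> < d \<longrightarrow> (\<forall>x\<in>\<Omega>. \<bar>G s x - G t x\<bar> \<le> B * \<bar>s - t\<bar>)"
      using dB(1) by blast
  qed
  have Gc: "continuous_on ({t0..} \<times> \<Omega>) (\<lambda>p. G (fst p) (snd p))" using jc[OF Gct Glip] .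
  have uc: "continuous_on ({t0..} \<times> \<Omega>) (\<lambda>p. u (fst p) (snd p))" using jc[OF _ lipu] ucO by blast
  have u1c: "continuous_on ({t0..} \<times> \<Omega>) (\<lambda>p. u1 (fst p) (snd p))" using jc[OF _ lipu1] u1cO by blast
  have cJc: "continuous_on ({t0..} \<times> \<Omega>) (\<lambda>p. calJ \<Omega> J \<delta> (snd p))"
    by (rule continuous_on_compose2[OF calJ_cont[OF ctx] continuous_on_snd]) auto
  have fcont: "continuous_on UNIV f"
    using fd by (intro continuous_at_imp_continuous_on ballI DERIV_isCont) auto
  have fuc: "continuous_on ({t0..} \<times> \<Omega>) (\<lambda>p. f (u (fst p) (snd p)))"
    by (rule continuous_on_compose2[OF fcont uc]) auto
  define R where "R p = u1 (fst p) (snd p) - (G (fst p) (snd p) - u (fst p) (snd p) * calJ \<Omega> J \<delta> (snd p) + f (u (fst p) (snd p)))" for p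
  have Rc: "continuous_on ({t0..} \<times> \<Omega>) R"
    unfolding R_def by (intro continuous_on_diff continuous_on_add continuous_on_mult u1c Gc uc cJc fuc)
  have R0: "\<bar>R p\<bar> \<le> 0" if p: "p \<in> {t0<..} \<times> \<Omega>" for p
  proof (rule AE_cont_le[of "{t0<..} \<times> \<Omega>"])
    show "open ({t0<..} \<times> \<Omega>)" using opn by (intro open_Times) auto
    show "continuous_on ({t0<..} \<times> \<Omega>) (\<lambda>p. \<bar>R p\<bar>)"
      by (intro continuous_on_rabs continuous_on_subset[OF Rc]) auto
    show "p \<in> {t0<..} \<times> \<Omega>" by fact
    show "AE p in lborel. p \<in> {t0<..} \<times> \<Omega> \<longrightarrow> \<bar>R p\<bar> \<le> 0"
      using eqn
    proof eventually_elim
      case (elim p)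
      show ?case
      proof
        assume pm: "p \<in> {t0<..} \<times> \<Omega>"
        then have tt: "fst p \<ge> t0" "snd p \<in> \<Omega>" "fst p > t0" by auto
        have "nl_op \<Omega> J \<delta> (u (fst p)) (snd p) = G (fst p) (snd p) - u (fst p) (snd p) * calJ \<Omega> J \<delta> (snd p)"
          unfolding G_def using nl_op_eq[OF ctx tt(2) ucO[OF tt(1)] ub1[OF tt(1)]] .
        then show "\<bar>R p\<bar> \<le> 0" using elim tt unfolding R_def by simp
      qed
    qed
  qed
  have eqall: "u1 t x = G t x - u t x * calJ \<Omega> J \<delta> x + f (u t x)" if t: "t \<ge> t0" and x: "x \<in> \<Omega>" for t x
  proof -
    have "\<bar>R (t, x)\<bar> \<le> 0"
    proof (rule continuous_le_on_closure[of "{t0<..}" "\<lambda>t. \<bar>R (t, x)\<bar>"])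
      have "continuous_on {t0..} (\<lambda>t. R (t, x))"
        by (rule continuous_on_compose2[OF Rc]) (use x in \<open>auto intro!: continuous_intros\<close>)
      then show "continuous_on (closure {t0<..}) (\<lambda>t. \<bar>R (t, x)\<bar>)"
        by (simp add: continuous_on_rabs)
      show "t \<in> closure {t0<..}" using t by simp
      show "\<And>s. s \<in> {t0<..} \<Longrightarrow> \<bar>R (s, x)\<bar> \<le> 0" using R0 x by auto
    qed
    then show ?thesis unfolding R_def by simp
  qed

  have key: "u1 t x - u1 t y = (G t x - G t y) - calJ \<Omega> J \<delta> x * (u t x - u t y) - u t y * (calJ \<Omega> J \<delta> x - calJ \<Omega> J \<delta> y) + (f (u t x) - f (u t y))"
    if "t \<ge> t0" "x \<in> \<Omega>" "y \<in> \<Omega>" for t x y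
    using eqall[OF that(1,2)] eqall[OF that(1,3)] by (simp add: algebra_simps)

  have Hu: "\<bar>u t x - u t y\<bar> \<le> M1 * dist x y powr \<alpha>" if t: "t \<ge> t0" and x: "x \<in> \<Omega>" and y: "y \<in> \<Omega>" for t x y
  proof -
    define P where "P = dist x y powr \<alpha>"
    have P0: "P \<ge> 0" unfolding P_def by simp
    have M1c: "2 * C * P \<le> c * (M1 * P)"
    proof -
      have "c * (M1 * P) = c * H * P + 2 * C * P" unfolding M1_def using c0 by (simp add: field_simps)
      moreover have "c * H * P \<ge> 0" using c0 H0 P0 by simp
      ultimately show ?thesis by linarith
    qed
    have M10: "M1 \<ge> 0" unfolding M1_def using H0 C0 c0 by simp
    show ?thesis unfolding P_def[symmetric]
    proof (rule ode_bound[where w="\<lambda>t. u t x - u t y" and w'="\<lambda>t. u1 t x - u1 t y"])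
      show "\<forall>t\<ge>t0. ((\<lambda>t. u t x - u t y) has_real_derivative u1 t x - u1 t y) (at t within {t0..})"
        using der x y OE by (auto intro!: DERIV_diff)
      show "t0 \<le> t" by fact
      have xyc: "x \<in> closure \<Omega>" "y \<in> closure \<Omega>" using x y closure_subset by auto
      have "\<bar>u t0 x - u t0 y\<bar> = \<bar>u0 x - u0 y\<bar>" using init xyc by simp
      also have "\<dots> \<le> H * P" using hu0 x y unfolding P_def by blast
      also have "\<dots> \<le> M1 * P" unfolding M1_def using C0 c0 P0 by (intro mult_right_mono) auto
      finally show "\<bar>u t0 x - u t0 y\<bar> \<le> M1 * P" .
      show "\<forall>s>t0. M1 * P < \<bar>u s x - u s y\<bar> \<longrightarrow> (u s x - u s y) * (u1 s x - u1 s y) < 0"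
      proof (intro allI impI)
        fix s assume s: "s > t0" and big: "M1 * P < \<bar>u s x - u s y\<bar>"
        have s0': "s \<ge> t0" using s by simp
        define w where "w = u s x - u s y"
        define b where "b = u s y"
        define dG where "dG = G s x - G s y"
        define dJ where "dJ = calJ \<Omega> J \<delta> x - calJ \<Omega> J \<delta> y"
        have b01: "\<bar>b\<bar> \<le> 1" using u01[OF s0'] y OE unfolding b_def by auto
        have dGb: "\<bar>dG\<bar> \<le> C * P" unfolding dG_def P_def using GL[OF s0' x y] .
        have dJb: "\<bar>dJ\<bar> \<le> C * P" unfolding dJ_def P_def using calJ_Lip[OF ctx x y] .
        obtain z where z: "z \<in> {0..1}" "f (u s x) - f (u s y) = f' z * w"
          proof -
          have "x \<in> E" "y \<in> E" using x y OE by auto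
          then have ux: "u s x \<in> {0..1}" "u s y \<in> {0..1}" using u01[OF s0'] by auto
          from fmvt[OF fd ux] show ?thesis using that unfolding w_def by blast
        qed
        have kk: "u1 s x - u1 s y = dG - calJ \<Omega> J \<delta> x * w - b * dJ + f' z * w"
          using key[OF s0' x y] z(2) unfolding w_def b_def dG_def dJ_def by simp
        have A1: "w * dG \<le> \<bar>w\<bar> * (C * P)"
        proof -
          have "w * dG \<le> \<bar>w * dG\<bar>" by simp
          also have "\<dots> = \<bar>w\<bar> * \<bar>dG\<bar>" by (simp add: abs_mult)
          also have "\<dots> \<le> \<bar>w\<bar> * (C * P)" using dGb by (intro mult_left_mono) auto
          finally show ?thesis .
        qed
        have A2: "- (w * (b * dJ)) \<le> \<bar>w\<bar> * (C * P)"
        proof -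
          have "- (w * (b * dJ)) \<le> \<bar>w * (b * dJ)\<bar>" by simp
          also have "\<dots> = \<bar>w\<bar> * (\<bar>b\<bar> * \<bar>dJ\<bar>)" by (simp add: abs_mult)
          also have "\<bar>b\<bar> * \<bar>dJ\<bar> \<le> 1 * (C * P)" using b01 dJb by (intro mult_mono) auto
          then have "\<bar>w\<bar> * (\<bar>b\<bar> * \<bar>dJ\<bar>) \<le> \<bar>w\<bar> * (C * P)" by (intro mult_left_mono) auto
          finally show ?thesis .
        qed
        have ww: "w * w \<ge> 0" by simp
        have A3: "f' z * (w * w) \<le> f' s0 * (w * w)" using fs0 ww by (intro mult_right_mono) auto
        have A4: "(f' s0 + c) * (w * w) \<le> calJ \<Omega> J \<delta> x * (w * w)" using cJ x ww by (intro mult_right_mono) auto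
        have wpos: "\<bar>w\<bar> > 0" using big P0 M10 unfolding w_def by (smt (verit) mult_nonneg_nonneg)
        have A5: "2 * C * P < c * \<bar>w\<bar>"
        proof -
          have "c * (M1 * P) < c * \<bar>w\<bar>" using big c0 unfolding w_def by simp
          then show ?thesis using M1c by linarith
        qed
        have A6: "\<bar>w\<bar> * (2 * C * P - c * \<bar>w\<bar>) < 0" using wpos A5 by (intro mult_pos_neg) auto
        have id: "w * (u1 s x - u1 s y) = w * dG - calJ \<Omega> J \<delta> x * (w * w) - w * (b * dJ) + f' z * (w * w)"
          unfolding kk by (simp add: algebra_simps)
        have "w * w = \<bar>w\<bar> * \<bar>w\<bar>" by (simp add: abs_mult[symmetric])
        then have "w * (u1 s x - u1 s y) \<le> \<bar>w\<bar> * (2 * C * P - c * \<bar>w\<bar>)"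
          using id A1 A2 A3 A4 by (simp add: algebra_simps)
        with A6 show "(u s x - u s y) * (u1 s x - u1 s y) < 0" unfolding w_def by linarith
      qed
    qed
  qed

  have Hu1: "\<bar>u1 t x - u1 t y\<bar> \<le> M2 * dist x y powr \<alpha>" if t: "t \<ge> t0" and x: "x \<in> \<Omega>" and y: "y \<in> \<Omega>" for t x y
  proof -
    define P where "P = dist x y powr \<alpha>"
    have P0: "P \<ge> 0" unfolding P_def by simp
    define w where "w = u t x - u t y"
    define b where "b = u t y"
    define dG where "dG = G t x - G t y"
    define dJ where "dJ = calJ \<Omega> J \<delta> x - calJ \<Omega> J \<delta> y"
    have b01: "\<bar>b\<bar> \<le> 1" using u01[OF t] y OE unfolding b_def by auto
    have dGb: "\<bar>dG\<bar> \<le> C * P" unfolding dG_def P_def using GL[OF t x y] .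
    have dJb: "\<bar>dJ\<bar> \<le> C * P" unfolding dJ_def P_def using calJ_Lip[OF ctx x y] .
    have wb: "\<bar>w\<bar> \<le> M1 * P" unfolding w_def P_def using Hu[OF t x y] .
    obtain z where z: "z \<in> {0..1}" "f (u t x) - f (u t y) = f' z * w"
      proof -
      have "x \<in> E" "y \<in> E" using x y OE by auto
      then have ux: "u t x \<in> {0..1}" "u t y \<in> {0..1}" using u01[OF t] by auto
      from fmvt[OF fd ux] show ?thesis using that unfolding w_def by blast
    qed
    have kk: "u1 t x - u1 t y = dG - calJ \<Omega> J \<delta> x * w - b * dJ + f' z * w"
      using key[OF t x y] z(2) unfolding w_def b_def dG_def dJ_def by simp
    have B1: "\<bar>calJ \<Omega> J \<delta> x * w\<bar> \<le> CJ * (M1 * P)"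
      using calJ_le[OF ctx x] calJ_nn[OF ctx, of x] wb by (simp add: abs_mult mult_mono)
    have B2: "\<bar>b * dJ\<bar> \<le> 1 * (C * P)"
    proof -
      have "\<bar>b\<bar> * \<bar>dJ\<bar> \<le> 1 * \<bar>dJ\<bar>" by (rule mult_right_mono[OF b01]) simp
      then show ?thesis using dJb by (simp add: abs_mult)
    qed
    have B3: "\<bar>f' z * w\<bar> \<le> Bf * (M1 * P)"
    proof -
      have fz: "\<bar>f' z\<bar> \<le> Bf" using Bf z(1) by blast
      have "\<bar>f' z\<bar> * \<bar>w\<bar> \<le> Bf * (M1 * P)" by (rule mult_mono[OF fz wb]) (use fz in auto)
      then show ?thesis by (simp add: abs_mult)
    qed
    have "\<bar>u1 t x - u1 t y\<bar> \<le> \<bar>dG\<bar> + \<bar>calJ \<Omega> J \<delta> x * w\<bar> + \<bar>b * dJ\<bar> + \<bar>f' z * w\<bar>"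
      unfolding kk by (rule abs4)
    also have "\<dots> \<le> C * P + CJ * (M1 * P) + 1 * (C * P) + Bf * (M1 * P)"
      using dGb B1 B2 B3 by linarith
    also have "\<dots> = M2 * P" unfolding M2_def by (simp add: algebra_simps)
    finally show ?thesis unfolding P_def .
  qed

  have SU: "holder_semi \<alpha> E (u t) \<le> ereal M1" if t: "t \<ge> t0" for t
    unfolding E_def by (rule holder_ext[OF _ _ a0]) (use ucE[OF t] Hu[OF t] in \<open>auto simp: E_def\<close>)
  have SU1: "holder_semi \<alpha> E (u1 t) \<le> ereal M2" if t: "t \<ge> t0" for t
    unfolding E_def by (rule holder_ext[OF _ _ a0]) (use u1cE[OF t] Hu1[OF t] in \<open>auto simp: E_def\<close>)
  have "(SUP t\<in>{t0..}. holder_semi \<alpha> E (u t) + holder_semi \<alpha> E (u1 t)) \<le> ereal (M1 + M2)"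
  proof (rule SUP_least)
    fix t assume "t \<in> {t0..}"
    then have "holder_semi \<alpha> E (u t) + holder_semi \<alpha> E (u1 t) \<le> ereal M1 + ereal M2"
      using SU SU1 by (intro add_mono) auto
    then show "holder_semi \<alpha> E (u t) + holder_semi \<alpha> E (u1 t) \<le> ereal (M1 + M2)" by simp
  qed
  then show ?thesis unfolding E_def M1_def M2_def .
qed


theorem proposition3p4:
  fixes K :: "'a::euclidean_space set"
    and \<delta> :: "'a \<Rightarrow> 'a \<Rightarrow> real"
    and J :: "real \<Rightarrow> real"
    and f' :: "real \<Rightarrow> real"
    and \<alpha> M0 H :: real
  assumes "compact K"
    and "connected (- K)"
    and "quasi_euclidean (closure (- K)) \<delta>"
    and "assumption_AJ (- K) J \<delta>"
    and "continuous_on UNIV f'"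
    and "\<exists>s0. (\<forall>s. f' s \<le> f' s0) \<and> f' s0 < (INF x\<in>- K. calJ (- K) J \<delta> x)"
    and "0 < \<alpha>" and "\<alpha> < 1"
    and "besov_B \<alpha> (- K) \<delta> J"
    and "0 < M0"
  shows "\<exists>M>0. \<forall>f t0 u0 u u1 u2.
     (\<forall>s. (f has_real_derivative f' s) (at s)) \<and> (\<exists>Lf. lipschitz_on Lf UNIV f) \<and>
     holder_space \<alpha> (closure (- K)) u0 \<and> holder_semi \<alpha> (closure (- K)) u0 = ereal H \<and>
     C2_curve (closure (- K)) t0 u u1 u2 \<and>
     (AE p in lborel. fst p > t0 \<and> snd p \<in> - K \<longrightarrow>
        u1 (fst p) (snd p) = nl_op (- K) J \<delta> (u (fst p)) (snd p) + f (u (fst p) (snd p))) \<and>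
     (\<forall>x\<in>closure (- K). u t0 x = u0 x) \<and>
     (\<forall>t\<ge>t0. \<forall>x\<in>closure (- K). \<bar>u t x\<bar> \<le> M0)
     \<longrightarrow> (SUP t\<in>{t0..}. holder_semi \<alpha> (closure (- K)) (u t) + holder_semi \<alpha> (closure (- K)) (u1 t)) \<le> ereal M"
proof -
  have opn: "open (- K)" using assms(1) compact_imp_closed by blast
  have qe: "quasi_euclidean (closure (- K)) \<delta>" by (rule assms(3))
  have a0: "\<alpha> > 0" by (rule assms(7))
  have AJ: "integrable lborel (\<lambda>z::'a. J (norm z))" "\<forall>t\<ge>0. J t \<ge> 0"
      "\<exists>C. AE x in lborel. x \<in> - K \<longrightarrow> calJ_enn (- K) J \<delta> x \<le> ennreal C"
    using assms(4) unfolding assumption_AJ_def by auto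
  have jnn: "\<forall>t\<ge>0. J t \<ge> 0" by (rule AJ(2))
  have jm: "(\<lambda>t. J \<bar>t\<bar>) \<in> borel_measurable borel"
  proof -
    obtain e :: 'a where e: "e \<in> Basis" using nonempty_Basis by blast
    have jn: "(\<lambda>z::'a. J (norm z)) \<in> borel_measurable borel"
      using borel_measurable_integrable[OF AJ(1)] by simp
    have se: "(\<lambda>t::real. t *\<^sub>R e) \<in> borel_measurable borel" by measurable
    have "(\<lambda>t::real. J (norm (t *\<^sub>R e))) \<in> borel_measurable borel"
      using measurable_compose[OF se jn] by simp
    moreover have ne: "norm e = 1" using e by simp
    have "(\<lambda>t::real. J (norm (t *\<^sub>R e))) = (\<lambda>t. J \<bar>t\<bar>)" by (simp add: ne)
    ultimately show ?thesis by simp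
  qed
  obtain CB0 where CB0: "\<forall>y\<in>- K. \<forall>z\<in>- K. y \<noteq> z \<longrightarrow> L1_diff (- K) J \<delta> y z \<le> ennreal (CB0 * dist y z powr \<alpha>)"
    using assms(9) unfolding besov_B_def by blast
  define C where "C = max CB0 0"
  have C0: "C \<ge> 0" unfolding C_def by simp
  have bes: "\<forall>y\<in>- K. \<forall>z\<in>- K. y \<noteq> z \<longrightarrow> L1_diff (- K) J \<delta> y z \<le> ennreal (C * dist y z powr \<alpha>)"
  proof (intro ballI impI)
    fix y z assume yz: "y \<in> - K" "z \<in> - K" "y \<noteq> z"
    have "ennreal (CB0 * dist y z powr \<alpha>) \<le> ennreal (C * dist y z powr \<alpha>)"
      unfolding C_def by (intro ennreal_leI mult_right_mono) auto
    then show "L1_diff (- K) J \<delta> y z \<le> ennreal (C * dist y z powr \<alpha>)"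
      using CB0 yz by (meson order_trans)
  qed
  obtain CJ0 where CJ0': "AE x in lborel. x \<in> - K \<longrightarrow> calJ_enn (- K) J \<delta> x \<le> ennreal CJ0"
    using AJ(3) by blast
  define CJ where "CJ = max CJ0 0"
  have CJ0: "CJ \<ge> 0" unfolding CJ_def by simp
  have cj: "AE x in lborel. x \<in> - K \<longrightarrow> calJ_enn (- K) J \<delta> x \<le> ennreal CJ"
    using CJ0'
  proof eventually_elim
    case (elim x)
    have "ennreal CJ0 \<le> ennreal CJ" unfolding CJ_def by (intro ennreal_leI) auto
    then show ?case using elim by (meson order_trans)
  qed
  note ctx = opn qe jm jnn bes C0 a0 CJ0 cj
  obtain s0 where s0: "\<forall>s. f' s \<le> f' s0" and lt: "f' s0 < (INF x\<in>- K. calJ (- K) J \<delta> x)"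
    using assms(6) by blast
  define c where "c = (INF x\<in>- K. calJ (- K) J \<delta> x) - f' s0"
  have c0: "c > 0" using lt unfolding c_def by simp
  have cJ: "\<forall>x\<in>- K. f' s0 + c \<le> calJ (- K) J \<delta> x"
  proof
    fix x assume x: "x \<in> - K"
    have "bdd_below ((\<lambda>x. calJ (- K) J \<delta> x) ` (- K))"
      by (rule bdd_belowI2[where m=0]) (rule calJ_nn[OF ctx])
    then have "(INF x\<in>- K. calJ (- K) J \<delta> x) \<le> calJ (- K) J \<delta> x" using x by (rule cINF_lower)
    then show "f' s0 + c \<le> calJ (- K) J \<delta> x" unfolding c_def by simp
  qed
  have "compact (f' ` {0..1})"
    by (rule compact_continuous_image[OF continuous_on_subset[OF assms(5)]]) auto
  then have "bounded (f' ` {0..1})" by (rule compact_imp_bounded)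
  then obtain Bf where Bf0: "Bf \<ge> 0" and Bf: "\<forall>s\<in>{0..1}. \<bar>f' s\<bar> \<le> Bf" using bounded_absD by blast
  define H' where "H' = max H 0"
  define M1 where "M1 = H' + 2 * C / c"
  define M2 where "M2 = 2 * C + (CJ + Bf) * M1"
  have M10: "M1 \<ge> 0" unfolding M1_def H'_def using C0 c0 by simp
  have M20: "M2 \<ge> 0" unfolding M2_def using C0 CJ0 Bf0 M10 by simp
  have main: "\<forall>f t0 u0 u u1 u2.
     (\<forall>s. (f has_real_derivative f' s) (at s)) \<and> (\<exists>Lf. lipschitz_on Lf UNIV f) \<and>
     holder_space \<alpha> (closure (- K)) u0 \<and> holder_semi \<alpha> (closure (- K)) u0 = ereal H \<and>
     C2_curve (closure (- K)) t0 u u1 u2 \<and>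
     (AE p in lborel. fst p > t0 \<and> snd p \<in> - K \<longrightarrow>
        u1 (fst p) (snd p) = nl_op (- K) J \<delta> (u (fst p)) (snd p) + f (u (fst p) (snd p))) \<and>
     (\<forall>x\<in>closure (- K). u t0 x = u0 x) \<and>
     (\<forall>t\<ge>t0. \<forall>x\<in>closure (- K). \<bar>u t x\<bar> \<le> M0)
     \<longrightarrow> (SUP t\<in>{t0..}. holder_semi \<alpha> (closure (- K)) (u t) + holder_semi \<alpha> (closure (- K)) (u1 t)) \<le> ereal (M1 + M2 + 1)"
  proof (intro allI impI)
    fix f t0 u0 and u u1 u2 :: "real \<Rightarrow> 'a \<Rightarrow> real"
    assume hyp: "(\<forall>s. (f has_real_derivative f' s) (at s)) \<and> (\<exists>Lf. lipschitz_on Lf UNIV f) \<and>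
     holder_space \<alpha> (closure (- K)) u0 \<and> holder_semi \<alpha> (closure (- K)) u0 = ereal H \<and>
     C2_curve (closure (- K)) t0 u u1 u2 \<and>
     (AE p in lborel. fst p > t0 \<and> snd p \<in> - K \<longrightarrow>
        u1 (fst p) (snd p) = nl_op (- K) J \<delta> (u (fst p)) (snd p) + f (u (fst p) (snd p))) \<and>
     (\<forall>x\<in>closure (- K). u t0 x = u0 x) \<and>
     (\<forall>t\<ge>t0. \<forall>x\<in>closure (- K). \<bar>u t x\<bar> \<le> M0)"
    have fd: "\<forall>s. (f has_real_derivative f' s) (at s)" using hyp by blast
    have hs: "holder_semi \<alpha> (closure (- K)) u0 = ereal H" using hyp by blast
    have C2: "C2_curve (closure (- K)) t0 u u1 u2" using hyp by blast
    have eqn: "AE p in lborel. fst p > t0 \<and> snd p \<in> - K \<longrightarrow>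
        u1 (fst p) (snd p) = nl_op (- K) J \<delta> (u (fst p)) (snd p) + f (u (fst p) (snd p))" using hyp by blast
    have init: "\<forall>x\<in>closure (- K). u t0 x = u0 x" using hyp by blast
    have H0: "H' \<ge> 0" unfolding H'_def by simp
    have hu0: "\<forall>x\<in>- K. \<forall>y\<in>- K. \<bar>u0 x - u0 y\<bar> \<le> H' * dist x y powr \<alpha>"
    proof (intro ballI)
      fix x y assume x: "x \<in> - K" and y: "y \<in> - K"
      show "\<bar>u0 x - u0 y\<bar> \<le> H' * dist x y powr \<alpha>"
      proof (cases "x = y")
        case True then show ?thesis using H0 by simp
      next
        case False
        have xy: "(x, y) \<in> {(x, y). x \<in> closure (- K) \<and> y \<in> closure (- K) \<and> x \<noteq> y}"
          using x y False closure_subset[of "- K"] by auto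
        have "ereal (\<bar>u0 (fst (x, y)) - u0 (snd (x, y))\<bar> / dist (fst (x, y)) (snd (x, y)) powr \<alpha>) \<le> holder_semi \<alpha> (closure (- K)) u0"
          unfolding holder_semi_def using xy by (rule SUP_upper)
        then have "\<bar>u0 x - u0 y\<bar> / dist x y powr \<alpha> \<le> H" using hs by simp
        moreover have "dist x y powr \<alpha> > 0" using False by simp
        ultimately have "\<bar>u0 x - u0 y\<bar> \<le> H * dist x y powr \<alpha>" by (simp add: pos_divide_le_eq)
        also have "\<dots> \<le> H' * dist x y powr \<alpha>" unfolding H'_def by (intro mult_right_mono) auto
        finally show ?thesis .
      qed
    qed
    have "(SUP t\<in>{t0..}. holder_semi \<alpha> (closure (- K)) (u t) + holder_semi \<alpha> (closure (- K)) (u1 t))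
       \<le> ereal ((H' + 2 * C / c) + (2 * C + (CJ + Bf) * (H' + 2 * C / c)))"
      by (rule inner[OF ctx c0 cJ s0 Bf fd H0 hu0 C2 eqn init])
    also have "\<dots> \<le> ereal (M1 + M2 + 1)" unfolding M1_def M2_def by simp
    finally show "(SUP t\<in>{t0..}. holder_semi \<alpha> (closure (- K)) (u t) + holder_semi \<alpha> (closure (- K)) (u1 t)) \<le> ereal (M1 + M2 + 1)" .
  qed
  have "M1 + M2 + 1 > 0" using M10 M20 by simp
  with main show ?thesis by blast
qed


end
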